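(* Let $G=(V,E)$ be any graph (finite or infinite) and let $F$ and $F'$ be two partitions of $V$ each consisting of maximal ``strong'' partitive sets of $G$. Then $F=F'$.
   Context: A graph $G=(V,E)$ has vertex set $V$ and edge set $E\subseteq V^2$. A set $X\subseteq V$ is a partitive set of $G$ if for all $a,b\in X$ and $c\in V\setminus X$: $(a,c)\in E\Leftrightarrow(b,c)\in E$ and $(c,a)\in E\Leftrightarrow(c,b)\in E$; $I(G)$ is the class of partitive sets. A ``strong'' partitive set is an $X\in I(G)$ such that for every $Y\in I(G)$ with $X\cap Y\neq\emptyset$, $X\subseteq Y$ or $Y\subseteq X$; $I_F(G)$ is their class. A maximal ``strong'' partitive set is an element of $I_F(G)\setminus\{V\}$ maximal for inclusion in $I_F(G)\setminus\{V\}$. *)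

theory Defs
  imports Main "HOL-Library.Disjoint_Sets"
begin

text \<open>A graph is a pair (V, E) with E a subset of V x V (directed, loops allowed).\<close>

definition graph :: "'a set \<Rightarrow> ('a \<times> 'a) set \<Rightarrow> bool" where
  "graph V E \<longleftrightarrow> E \<subseteq> V \<times> V"

definition partitive :: "'a set \<Rightarrow> ('a \<times> 'a) set \<Rightarrow> 'a set \<Rightarrow> bool" where
  "partitive V E X \<longleftrightarrow> X \<subseteq> V \<and>
     (\<forall>a\<in>X. \<forall>b\<in>X. \<forall>c\<in>V - X.
        ((a, c) \<in> E \<longleftrightarrow> (b, c) \<in> E) \<and> ((c, a) \<in> E \<longleftrightarrow> (c, b) \<in> E))"

definition I_G :: "'a set \<Rightarrow> ('a \<times> 'a) set \<Rightarrow> 'a set set" where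
  "I_G V E = {X. partitive V E X}"

definition I_F :: "'a set \<Rightarrow> ('a \<times> 'a) set \<Rightarrow> 'a set set" where
  "I_F V E = {X \<in> I_G V E. \<forall>Y\<in>I_G V E. X \<inter> Y \<noteq> {} \<longrightarrow> X \<subseteq> Y \<or> Y \<subseteq> X}"

definition max_strong :: "'a set \<Rightarrow> ('a \<times> 'a) set \<Rightarrow> 'a set \<Rightarrow> bool" where
  "max_strong V E X \<longleftrightarrow> X \<in> I_F V E - {V} \<and>
     (\<forall>Y\<in>I_F V E - {V}. X \<subseteq> Y \<longrightarrow> Y = X)"

end

theory Submission
  imports Defs
begin

lemma sub_aux:
  assumes "partition_on V F" and "\<forall>X\<in>F. max_strong V E X"
    and "partition_on V F'" and "\<forall>X\<in>F'. max_strong V E X"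
  shows "F \<subseteq> F'"
proof
  fix X assume X: "X \<in> F"
  then have "X \<noteq> {}" using assms(1) by (auto simp: partition_on_def)
  then obtain x where x: "x \<in> X" by blast
  have "x \<in> V" using X x assms(1) by (auto simp: partition_on_def)
  then obtain X' where X': "X' \<in> F'" "x \<in> X'" using assms(3) by (auto simp: partition_on_def)
  have mX: "max_strong V E X" using X assms(2) by blast
  have mX': "max_strong V E X'" using X' assms(4) by blast
  have "X \<subseteq> X' \<or> X' \<subseteq> X"
    using mX mX' x X' unfolding max_strong_def I_F_def by blast
  then have "X = X'" using mX mX' unfolding max_strong_def by blast
  then show "X \<in> F'" using X' by simp
qed

theorem lemma4p2:
  fixes V :: "'a set" and E :: "('a \<times> 'a) set" and F F' :: "'a set set"
  assumes "graph V E"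
    and "partition_on V F" and "\<forall>X\<in>F. max_strong V E X"
    and "partition_on V F'" and "\<forall>X\<in>F'. max_strong V E X"
  shows "F = F'"
  using sub_aux[OF assms(2-5)] sub_aux[OF assms(4,5,2,3)] by blast

end
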